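(* Let $p$ be a prime and let $G$ be a non-abelian finite $p$-group of order $p^n$, with $d=d(G)$, $\delta=d(G/Z(G))$, $k'=d(\gamma_2G/\gamma_3G)$ and $|\gamma_2G|=p^k$. Let $r,t$ be non-negative integers with $\binom{\delta}{2}-k'=\binom{r}{2}+t$ and $0\le t<r$. Then \[\tfrac{1}{2}(d-1)(n+k)-k(d-\delta)-\binom{\delta}{3}+\binom{r}{3}+\binom{t}{2}\;\le\;\tfrac{1}{2}(d-1)(n+k)-\sum_{i=2}^{\min(d,k'+1)}(d-i).\]
   Context: $d(\cdot)$ denotes the minimal number of generators, $Z(G)$ the center, $\gamma_iG$ the lower central series. Binomial coefficients satisfy $\binom{a}{b}=0$ when $0\le a<b$; an empty sum is $0$. (The right-hand side is the exponent in a known bound $|M(G)|\le p^{\frac12(d-1)(n+k)-\sum_{i=2}^{\min(d,k'+1)}(d-i)}$ for the Schur multiplier; the left-hand side is the exponent of the bound $|M(G)|\le p^{\frac{1}{2}(d-1)(n+k)-k(d-\delta)-\binom{\delta}{3}+\binom{r}{3}+\binom{t}{2}}$.) *)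

theory Defs
  imports "HOL-Algebra.Algebra"
begin

definition min_gens :: "('a, 'b) monoid_scheme \<Rightarrow> nat" where
  "min_gens H = (LEAST m. \<exists>S. S \<subseteq> carrier H \<and> finite S \<and> card S = m \<and> generate H S = carrier H)"

definition grp_center :: "('a, 'b) monoid_scheme \<Rightarrow> 'a set" where
  "grp_center G = {z \<in> carrier G. \<forall>g \<in> carrier G. z \<otimes>\<^bsub>G\<^esub> g = g \<otimes>\<^bsub>G\<^esub> z}"

definition comm_subgroup :: "('a, 'b) monoid_scheme \<Rightarrow> 'a set \<Rightarrow> 'a set \<Rightarrow> 'a set" where
  "comm_subgroup G H K = generate G
     {inv\<^bsub>G\<^esub> h \<otimes>\<^bsub>G\<^esub> inv\<^bsub>G\<^esub> k \<otimes>\<^bsub>G\<^esub> h \<otimes>\<^bsub>G\<^esub> k | h k. h \<in> H \<and> k \<in> K}"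

fun lower_central :: "('a, 'b) monoid_scheme \<Rightarrow> nat \<Rightarrow> 'a set" where
  "lower_central G 0 = carrier G"
| "lower_central G (Suc 0) = carrier G"
| "lower_central G (Suc (Suc i)) = comm_subgroup G (lower_central G (Suc i)) (carrier G)"

end

theory Submission imports Defs "HOL-Computational_Algebra.Primes" begin

lemma mg_le:
  assumes "group H" "S \<subseteq> carrier H" "finite S" "generate H S = carrier H"
  shows "min_gens H \<le> card S"
  unfolding min_gens_def by (rule Least_le) (use assms in blast)

lemma mg_ex:
  assumes "group H" "finite (carrier H)"
  shows "\<exists>S. S \<subseteq> carrier H \<and> finite S \<and> card S = min_gens H \<and> generate H S = carrier H"
proof -
  interpret group H by fact
  have "generate H (carrier H) = carrier H"
    using generate_subgroup_incl[OF order_refl subgroup_self] generate.incl[of _ "carrier H" H] by blast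
  then have "\<exists>S. S \<subseteq> carrier H \<and> finite S \<and> card S = card (carrier H) \<and> generate H S = carrier H"
    using assms(2) by blast
  then have "\<exists>m. \<exists>S. S \<subseteq> carrier H \<and> finite S \<and> card S = m \<and> generate H S = carrier H" by blast
  from LeastI_ex[OF this] show ?thesis unfolding min_gens_def by blast
qed

lemma mg_quot:
  assumes "group H" "N \<lhd> H" "finite (carrier H)"
  shows "min_gens (H Mod N) \<le> min_gens H"
proof -
  interpret group H by fact
  interpret normal N H by fact
  obtain S where S: "S \<subseteq> carrier H" "finite S" "card S = min_gens H" "generate H S = carrier H"
    using mg_ex[OF assms(1,3)] by blast
  define h where "h = (\<lambda>a. N #>\<^bsub>H\<^esub> a)"
  have gh: "group_hom H (H Mod N) h"
    unfolding group_hom_def group_hom_axioms_def h_def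
    using r_coset_hom_Mod factorgroup_is_group assms(1) by blast
  have img: "h ` carrier H = carrier (H Mod N)"
    by (auto simp: h_def FactGroup_def RCOSETS_def)
  have "generate (H Mod N) (h ` S) = h ` generate H S"
    using group_hom.generate_img[OF gh S(1)] .
  also have "\<dots> = carrier (H Mod N)" using S(4) img by simp
  finally have g: "generate (H Mod N) (h ` S) = carrier (H Mod N)" .
  have "h ` S \<subseteq> carrier (H Mod N)" using S(1) img by blast
  then have "min_gens (H Mod N) \<le> card (h ` S)"
    using mg_le[OF factorgroup_is_group _ _ g] S(2) by blast
  also have "\<dots> \<le> card S" using S(2) card_image_le by blast
  finally show ?thesis using S(3) by simp
qed

lemma mg_pgroup:
  assumes "group H" "Factorial_Ring.prime (p::nat)" "order H = p ^ k"
  shows "min_gens H \<le> k"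
proof -
  interpret group H by fact
  have fin: "finite (carrier H)"
    proof -
    have "card (carrier H) > 0" using assms(2,3) unfolding order_def by (simp add: prime_gt_0_nat)
    then show ?thesis using card_ge_0_finite by blast
  qed
  have sub_card: "\<exists>i\<le>k. card (generate H S) = p ^ i" if "S \<subseteq> carrier H" for S
  proof -
    have "subgroup (generate H S) H" using generate_is_subgroup[OF that] .
    then have "card (generate H S) dvd p ^ k"
      proof -
      have "card (rcosets\<^bsub>H\<^esub> (generate H S)) * card (generate H S) = p ^ k"
        using lagrange[of "generate H S"] assms(3) \<open>subgroup (generate H S) H\<close> by simp
      then show ?thesis by (metis dvd_triv_right)
    qed
    then show ?thesis using divides_primepow_nat[OF assms(2)] by blast
  qed
  have main: "k - a = c \<Longrightarrow> S \<subseteq> carrier H \<Longrightarrow> finite S \<Longrightarrow> card (generate H S) = p ^ a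
     \<Longrightarrow> card S \<le> a \<Longrightarrow> min_gens H \<le> k" for c S a
  proof (induction c arbitrary: S a rule: less_induct)
    case (less c)
    have ak: "a \<le> k"
    proof -
      obtain i where "i \<le> k" "card (generate H S) = p ^ i" using sub_card[OF less.prems(2)] by blast
      then show ?thesis using less.prems(4) prime_gt_1_nat[OF assms(2)] by simp
    qed
    show ?case
    proof (cases "generate H S = carrier H")
      case True
      then show ?thesis using mg_le[OF assms(1) less.prems(2,3) True] less.prems(5) ak by linarith
    next
      case False
      have sub: "generate H S \<subseteq> carrier H" using generate_in_carrier[OF less.prems(2)] by blast
      with False obtain x where x: "x \<in> carrier H" "x \<notin> generate H S" by blast
      let ?S = "insert x S"
      have S': "?S \<subseteq> carrier H" "finite ?S" using x less.prems by auto
      have "generate H S \<subseteq> generate H ?S" by (rule mono_generate) blast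
      moreover have "x \<in> generate H ?S" by (rule generate.incl) simp
      ultimately have psub: "generate H S \<subset> generate H ?S" using x by blast
      obtain b where b: "b \<le> k" "card (generate H ?S) = p ^ b" using sub_card[OF S'(1)] by blast
      have "generate H ?S \<subseteq> carrier H" using generate_in_carrier[OF S'(1)] by blast
      then have "finite (generate H ?S)" using fin finite_subset by blast
      then have "p ^ a < p ^ b" using psubset_card_mono[OF _ psub] less.prems(4) b(2) by simp
      then have ab: "a < b" using prime_gt_1_nat[OF assms(2)] by simp
      have "card ?S \<le> b" using less.prems(3,5) ab by (simp add: card_insert_if)
      then show ?thesis using less.IH[of "k - b", OF _ refl S' b(2)] less.prems(1) ab b(1) by linarith
    qed
  qed
  show ?thesis
    using main[where a=0 and c=k and S="{}"] by (simp add: generate_empty)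
qed

lemma center_normal:
  fixes G :: "('a, 'b) monoid_scheme" (structure)
  assumes "group G"
  shows "grp_center G \<lhd> G"
proof -
  interpret group G by fact
  have sub: "subgroup (grp_center G) G"
  proof
    show "grp_center G \<subseteq> carrier G" unfolding grp_center_def by blast
    show "\<one> \<in> grp_center G" unfolding grp_center_def by simp
    fix x y assume x: "x \<in> grp_center G" and y: "y \<in> grp_center G"
    then have xc: "x \<in> carrier G" "\<forall>g\<in>carrier G. x \<otimes> g = g \<otimes> x"
      and yc: "y \<in> carrier G" "\<forall>g\<in>carrier G. y \<otimes> g = g \<otimes> y" unfolding grp_center_def by auto
    have xyc: "\<forall>g\<in>carrier G. x \<otimes> y \<otimes> g = g \<otimes> (x \<otimes> y)"
      using xc yc by (metis m_assoc m_closed)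
    have "x \<otimes> y \<in> carrier G" using xc(1) yc(1) by simp
    then show "x \<otimes> y \<in> grp_center G" unfolding grp_center_def using xyc by blast
    have "\<forall>g\<in>carrier G. inv x \<otimes> g = g \<otimes> inv x"
    proof
      fix g assume g: "g \<in> carrier G"
      have "x \<otimes> (inv x \<otimes> g) = x \<otimes> (g \<otimes> inv x)"
        using xc g by (metis inv_closed m_assoc r_inv l_one r_one)
      then show "inv x \<otimes> g = g \<otimes> inv x" using xc g by (metis inv_closed m_closed l_cancel)
    qed
    moreover have "inv x \<in> carrier G" using xc(1) by simp
    ultimately show "inv x \<in> grp_center G" unfolding grp_center_def by blast
  qed
  show ?thesis
  proof (rule normal_invI[OF sub])
    fix x h assume x: "x \<in> carrier G" and h: "h \<in> grp_center G"
    then have hc: "h \<in> carrier G" "\<forall>g\<in>carrier G. h \<otimes> g = g \<otimes> h" unfolding grp_center_def by auto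
    have "x \<otimes> h \<otimes> inv x = h" using hc x by (metis inv_closed m_assoc r_inv r_one)
    then show "x \<otimes> h \<otimes> inv x \<in> grp_center G" using h by simp
  qed
qed

lemma comm_normal:
  fixes G :: "('a, 'b) monoid_scheme" (structure)
  assumes "group G" "A \<subseteq> carrier G" "\<And>g a. g \<in> carrier G \<Longrightarrow> a \<in> A \<Longrightarrow> g \<otimes>\<^bsub>G\<^esub> a \<otimes>\<^bsub>G\<^esub> inv\<^bsub>G\<^esub> g \<in> A"
  shows "comm_subgroup G A (carrier G) \<lhd> G"
proof -
  interpret group G by fact
  show ?thesis unfolding comm_subgroup_def
  proof (rule normal_generateI)
    show "{inv h \<otimes> inv k \<otimes> h \<otimes> k |h k. h \<in> A \<and> k \<in> carrier G} \<subseteq> carrier G"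
      using assms(2) by blast
    fix c g assume c: "c \<in> {inv h \<otimes> inv k \<otimes> h \<otimes> k |h k. h \<in> A \<and> k \<in> carrier G}" and g: "g \<in> carrier G"
    then obtain h k where hk: "h \<in> A" "k \<in> carrier G" "c = inv h \<otimes> inv k \<otimes> h \<otimes> k" by blast
    have hc: "h \<in> carrier G" using hk assms(2) by blast
    define h' where "h' = g \<otimes> h \<otimes> inv g"
    define k' where "k' = g \<otimes> k \<otimes> inv g"
    have "h' \<in> A" using assms(3)[OF g hk(1)] h'_def by simp
    moreover have "k' \<in> carrier G" using g hk(2) k'_def by simp
    moreover have "g \<otimes> c \<otimes> inv g = inv h' \<otimes> inv k' \<otimes> h' \<otimes> k'"
    proof -
      have cc: "\<And>g x. g \<in> carrier G \<Longrightarrow> x \<in> carrier G \<Longrightarrow> inv g \<otimes> (g \<otimes> x) = x"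
        by (simp add: m_assoc[symmetric])
      show ?thesis
        unfolding h'_def k'_def hk(3) using g hc hk(2)
        by (simp add: m_assoc inv_mult_group cc)
    qed
    ultimately show "g \<otimes> c \<otimes> inv g \<in> {inv h \<otimes> inv k \<otimes> h \<otimes> k |h k. h \<in> A \<and> k \<in> carrier G}"
      by blast
  qed
qed

lemma comm_sub:
  fixes G :: "('a, 'b) monoid_scheme" (structure)
  assumes "group G" "A \<lhd> G"
  shows "comm_subgroup G A (carrier G) \<subseteq> A"
proof -
  interpret group G by fact
  interpret normal A G by fact
  show ?thesis unfolding comm_subgroup_def
  proof (rule generate_subgroup_incl)
    show "subgroup A G" by (rule subgroup_axioms)
    show "{inv h \<otimes> inv k \<otimes> h \<otimes> k |h k. h \<in> A \<and> k \<in> carrier G} \<subseteq> A"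
    proof clarify
      fix h k assume h: "h \<in> A" and k: "k \<in> carrier G"
      have hc: "h \<in> carrier G" using h by auto
      have "inv k \<otimes> h \<otimes> k \<in> A" using inv_op_closed1[OF k h] .
      moreover have "inv h \<in> A" using h by simp
      ultimately have "inv h \<otimes> (inv k \<otimes> h \<otimes> k) \<in> A" by simp
      then show "inv h \<otimes> inv k \<otimes> h \<otimes> k \<in> A" using hc k by (simp add: m_assoc)
    qed
  qed
qed


lemma choose_le_Suc: "(n choose j) \<le> (Suc n choose j)"
  by (cases j) simp_all

lemma choose_mono_top: "a \<le> b \<Longrightarrow> (a choose j) \<le> (b choose j)"
proof (induction b rule: dec_induct)
  case base then show ?case by simp
next
  case (step n) then show ?case using choose_le_Suc[of n j] by linarith
qed

lemma c2_Suc: "(Suc n choose 2) = (n choose 2) + n"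
  by (simp add: numeral_2_eq_2)

lemma c3_Suc: "(Suc n choose 3) = (n choose 3) + (n choose 2)"
  by (simp add: numeral_3_eq_3 numeral_2_eq_2)

lemma combG:
  fixes r t \<delta> :: nat
  assumes "(r choose 2) + t \<le> (\<delta> choose 2)" "t < r"
  shows "(r choose 3) + (t choose 2) \<le> (\<delta> choose 3)"
proof (cases "\<delta> < r")
  case True
  have "(Suc \<delta> choose 2) \<le> (r choose 2)" using True choose_mono_top[of "Suc \<delta>" r 2] by simp
  then have "\<delta> = 0" "t = 0" using assms(1) c2_Suc[of \<delta>] by linarith+
  have z: "(0::nat) choose 2 = 0" by simp
  have "r choose 2 = 0" using assms(1) z \<open>\<delta> = 0\<close> by (metis le_zero_eq add_leD1)
  have "r < 2"
  proof (rule ccontr)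
    assume "\<not> r < 2"
    then have "0 < (r choose 2)" by (simp add: zero_less_binomial_iff)
    then show False using \<open>r choose 2 = 0\<close> by simp
  qed
  then have "r = 1" using assms(2) by simp
  then show ?thesis using \<open>t = 0\<close> z by (simp add: binomial_eq_0)
next
  case False
  show ?thesis
  proof (cases "r = \<delta>")
    case True
    then show ?thesis using assms by simp
  next
    case False
    then have "Suc r \<le> \<delta>" using \<open>\<not> \<delta> < r\<close> by simp
    have "(t choose 2) \<le> (r choose 2)" using assms(2) choose_mono_top[of t r 2] by simp
    then have "(r choose 3) + (t choose 2) \<le> (Suc r choose 3)" using c3_Suc[of r] by simp
    also have "\<dots> \<le> (\<delta> choose 3)" using choose_mono_top[OF \<open>Suc r \<le> \<delta>\<close>] by blast
    finally show ?thesis .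
  qed
qed

lemma combH:
  fixes r t \<delta> k' :: nat
  assumes "(\<delta> choose 2) = Suc k' + (r choose 2) + t" "t < r" "k' + 2 \<le> \<delta>"
  shows "\<delta> - (k' + 2) \<le> t"
proof -
  obtain e where e: "\<delta> = Suc e" using assms(3) by (cases \<delta>) auto
  have "r \<le> e"
  proof (rule ccontr)
    assume "\<not> r \<le> e"
    then have "(\<delta> choose 2) \<le> (r choose 2)" using e choose_mono_top[of \<delta> r 2] by simp
    then show False using assms(1) by linarith
  qed
  show ?thesis
  proof (cases "r = e")
    case True
    then have "e = Suc k' + t" using assms(1) e c2_Suc[of e] by simp
    then show ?thesis using e by linarith
  next
    case False
    then have "Suc r \<le> e" using \<open>r \<le> e\<close> by simp
    have "(r choose 2) + r \<le> (e choose 2)" using choose_mono_top[OF \<open>Suc r \<le> e\<close>, of 2] c2_Suc[of r] by simp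
    have "(Suc e choose 2) = Suc k' + (r choose 2) + t" using assms(1) e by simp
    then have "e \<le> Suc k'" using assms(2) c2_Suc[of e] \<open>(r choose 2) + r \<le> (e choose 2)\<close> by linarith
    then show ?thesis using assms(3) e by linarith
  qed
qed

definition Snat :: "nat \<Rightarrow> nat \<Rightarrow> nat" where
  "Snat \<delta> k' = (\<Sum>i = 2..min \<delta> (k' + 1). \<delta> - i)"

lemma Snat_0: "Snat \<delta> 0 = 0"
  unfolding Snat_def by (cases \<delta>) auto

lemma Snat_Suc: "Snat \<delta> (Suc k') = Snat \<delta> k' + (if k' + 2 \<le> \<delta> then \<delta> - (k' + 2) else 0)"
proof (cases "k' + 2 \<le> \<delta>")
  case True
  then have "min \<delta> (Suc k' + 1) = Suc (min \<delta> (k' + 1))" by simp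
  then show ?thesis unfolding Snat_def using True by simp
next
  case False
  then have "min \<delta> (Suc k' + 1) = min \<delta> (k' + 1)" by simp
  then show ?thesis unfolding Snat_def using False by simp
qed

lemma comb_main:
  "(\<delta> choose 2) = k' + (r choose 2) + t \<Longrightarrow> t < r \<Longrightarrow> Snat \<delta> k' + (r choose 3) + (t choose 2) \<le> (\<delta> choose 3)"
proof (induction k' arbitrary: r t)
  case 0
  then show ?case using combG[of r t \<delta>] by (simp add: Snat_0)
next
  case (Suc k')
  have inc: "(if k' + 2 \<le> \<delta> then \<delta> - (k' + 2) else 0) \<le> t"
    using combH[OF Suc.prems] by simp
  show ?case
  proof (cases "Suc t < r")
    case True
    have "(\<delta> choose 2) = k' + (r choose 2) + Suc t" using Suc.prems by simp
    from Suc.IH[OF this True] have "Snat \<delta> k' + (r choose 3) + (Suc t choose 2) \<le> (\<delta> choose 3)" .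
    then show ?thesis using inc c2_Suc[of t] Snat_Suc[of \<delta> k'] by linarith
  next
    case False
    then have rt: "r = Suc t" using Suc.prems(2) by simp
    have "(\<delta> choose 2) = k' + (Suc r choose 2) + 0" using Suc.prems(1) rt c2_Suc[of r] by simp
    from Suc.IH[OF this] have "Snat \<delta> k' + (Suc r choose 3) + (0 choose 2) \<le> (\<delta> choose 3)" by simp
    then show ?thesis using inc c2_Suc[of t] c3_Suc[of r] rt Snat_Suc[of \<delta> k'] by simp
  qed
qed

lemma real_part:
  fixes d \<delta> k' :: nat
  assumes "\<delta> \<le> d"
  shows "(\<Sum>i = 2..min d (k' + 1). (real d - real i)) \<le> real (Snat \<delta> k') + real k' * (real d - real \<delta>)"
proof (induction k')
  case 0
  then show ?case by (simp add: Snat_0)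
next
  case (Suc k')
  have T: "(\<Sum>i = 2..min d (Suc k' + 1). (real d - real i)) =
        (\<Sum>i = 2..min d (k' + 1). (real d - real i)) + (if k' + 2 \<le> d then real d - real (k' + 2) else 0)"
  proof (cases "k' + 2 \<le> d")
    case True
    then have "min d (Suc k' + 1) = Suc (min d (k' + 1))" by simp
    then show ?thesis using True by simp
  next
    case False
    then have "min d (Suc k' + 1) = min d (k' + 1)" by simp
    then show ?thesis using False by simp
  qed
  have "(if k' + 2 \<le> d then real d - real (k' + 2) else 0)
        \<le> real (if k' + 2 \<le> \<delta> then \<delta> - (k' + 2) else 0) + (real d - real \<delta>)"
    using assms by auto
  then show ?case using Suc.IH T Snat_Suc[of \<delta> k'] by (simp add: algebra_simps)
qed


theorem lemma3p6:
  fixes G :: "('a, 'b) monoid_scheme" and p n k r t :: nat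
  assumes "group G" and "Factorial_Ring.prime p"
    and "finite (carrier G)" and "order G = p ^ n"
    and "\<not> comm_group G"
    and "card (lower_central G 2) = p ^ k"
    and "int (min_gens (G Mod grp_center G) choose 2)
           - int (min_gens (subgroup_generated G (lower_central G 2) Mod lower_central G 3))
         = int (r choose 2) + int t"
    and "t < r"
  shows "(let d = min_gens G;
              \<delta> = min_gens (G Mod grp_center G);
              k' = min_gens (subgroup_generated G (lower_central G 2) Mod lower_central G 3)
          in (1/2) * (real d - 1) * real (n + k) - real k * (real d - real \<delta>)
               - real (\<delta> choose 3) + real (r choose 3) + real (t choose 2)
             \<le> (1/2) * (real d - 1) * real (n + k)
               - (\<Sum>i = 2..min d (k' + 1). (real d - real i)))"
proof -
  interpret group G by fact
  define d where "d = min_gens G"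
  define \<delta> where "\<delta> = min_gens (G Mod grp_center G)"
  define g2 where "g2 = lower_central G 2"
  define g3 where "g3 = lower_central G 3"
  define k' where "k' = min_gens (subgroup_generated G g2 Mod g3)"
  have g2_def': "g2 = comm_subgroup G (carrier G) (carrier G)"
    unfolding g2_def by (simp add: numeral_2_eq_2)
  have g3_def': "g3 = comm_subgroup G g2 (carrier G)"
    unfolding g3_def g2_def by (simp add: numeral_3_eq_3 numeral_2_eq_2)
  have dd: "\<delta> \<le> d" unfolding \<delta>_def d_def
    using mg_quot[OF assms(1) center_normal[OF assms(1)] assms(3)] .
  have n2: "g2 \<lhd> G" unfolding g2_def' by (rule comm_normal[OF assms(1)]) auto
  have n3: "g3 \<lhd> G" unfolding g3_def'
    by (rule comm_normal[OF assms(1)]) (use n2 normal_invE[OF n2] in \<open>auto dest: normal_imp_subgroup subgroup.subset\<close>)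
  have s32: "g3 \<subseteq> g2" unfolding g3_def' using comm_sub[OF assms(1) n2] .
  have sg2: "subgroup g2 G" using n2 normal_imp_subgroup by blast
  have gen: "generate G (carrier G \<inter> g2) = g2"
    using subgroup.carrier_subgroup_generated_subgroup[OF sg2] carrier_subgroup_generated[of G g2] by simp
  have H2: "subgroup_generated G g2 = G\<lparr>carrier := g2\<rparr>"
    unfolding subgroup_generated_def gen ..
  have grpH: "group (subgroup_generated G g2)" by simp
  have nH: "g3 \<lhd> subgroup_generated G g2"
    unfolding H2 by (rule normal_restrict_supergroup[OF sg2 n3 s32])
  have finH: "finite (carrier (subgroup_generated G g2))"
    unfolding H2 using sg2 assms(3) by (auto dest: subgroup.subset intro: finite_subset)
  have ordH: "order (subgroup_generated G g2) = p ^ k"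
    unfolding H2 order_def using assms(6) g2_def by simp
  have kk: "k' \<le> k" unfolding k'_def
    using mg_quot[OF grpH nH finH] mg_pgroup[OF grpH assms(2) ordH] by linarith
  have eq: "(\<delta> choose 2) = k' + (r choose 2) + t"
    using assms(7) unfolding \<delta>_def k'_def g2_def g3_def by linarith
  have cm: "Snat \<delta> k' + (r choose 3) + (t choose 2) \<le> (\<delta> choose 3)"
    using comb_main[OF eq assms(8)] .
  then have cmr: "real (Snat \<delta> k') + real (r choose 3) + real (t choose 2) \<le> real (\<delta> choose 3)"
    by (metis of_nat_add of_nat_le_iff)
  have rp: "(\<Sum>i = 2..min d (k' + 1). (real d - real i)) \<le> real (Snat \<delta> k') + real k' * (real d - real \<delta>)"
    using real_part[OF dd] .
  have "real k' * (real d - real \<delta>) \<le> real k * (real d - real \<delta>)"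
    using kk dd by (intro mult_right_mono) auto
  then show ?thesis
    unfolding Let_def d_def[symmetric] \<delta>_def[symmetric] g2_def[symmetric] g3_def[symmetric] k'_def[symmetric]
    using cmr rp by linarith
qed

end
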